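(* For every integer $n\ge 1$, let $\overline{P}(n)_2$ be the $n\times n$ integer matrix with entries $\overline{p}_{i,j}\in\{0,1\}$, $0\le i,j<n$, defined by $\overline{p}_{i,j}\equiv\binom{i+j}{i}\pmod 2$. Then the determinant over $\mathbf{Z}$ satisfies $$\det(\overline{P}(n)_2)=\prod_{k=0}^{n-1}(-1)^{s_k},$$ where $s_k$ is the Thue–Morse sequence.
   Context: The Thue–Morse sequence is defined by $s_k=\sum_i\nu_i \pmod 2\in\{0,1\}$ where $k=\sum_i \nu_i 2^i$ is the binary expansion of $k$; equivalently $s_0=0$, $s_{2k}=s_k$, $s_{2k+1}=1-s_k$. *)

theory Defs
  imports Jordan_Normal_Form.Determinant
begin

fun binary_digit_sum :: "nat \<Rightarrow> nat" where
  "binary_digit_sum k = (if k = 0 then 0 else k mod 2 + binary_digit_sum (k div 2))"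

definition thue_morse :: "nat \<Rightarrow> nat" where
  "thue_morse k = binary_digit_sum k mod 2"

definition pascal_mod2 :: "nat \<Rightarrow> int mat" where
  "pascal_mod2 n = mat n n (\<lambda>(i, j). int (((i + j) choose i) mod 2))"

end

theory Submission
  imports Defs
begin

lemma base0: "(0 choose (2*k)) mod 2 = ((0::nat) choose k) mod 2 \<and> (0 choose (2*k+1)) mod 2 = 0 \<and>
  (1 choose (2*k)) mod 2 = ((0::nat) choose k) mod 2 \<and> (1 choose (2*k+1)) mod 2 = ((0::nat) choose k) mod 2"
  by (cases k) (auto simp: binomial_eq_0)

lemma addm: "(X::nat) mod 2 = U mod 2 \<Longrightarrow> Y mod 2 = V mod 2 \<Longrightarrow> (X+Y) mod 2 = (U+V) mod 2"
  by (metis mod_add_eq)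

lemma addm0: "(X::nat) mod 2 = U mod 2 \<Longrightarrow> Y mod 2 = 0 \<Longrightarrow> (X+Y) mod 2 = U mod 2"
  by (metis add.right_neutral mod_add_eq mod_0)

lemma addm0': "(Y::nat) mod 2 = 0 \<Longrightarrow> X mod 2 = U mod 2 \<Longrightarrow> (Y+X) mod 2 = U mod 2"
  by (metis add.commute addm0)

lemma binom_mod2:
  "((2*m) choose (2*k)) mod 2 = (m choose k) mod 2 \<and>
   ((2*m) choose (2*k+1)) mod 2 = 0 \<and>
   ((2*m+1) choose (2*k)) mod 2 = (m choose k) mod 2 \<and>
   ((2*m+1) choose (2*k+1)) mod 2 = (m choose k) mod 2"
proof (induction m arbitrary: k)
  case 0
  show ?case using base0 by simp
next
  case (Suc m)
  have A: "((2*Suc m) choose (2*k)) mod 2 = (Suc m choose k) mod 2" for k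
  proof (cases k)
    case 0 then show ?thesis by simp
  next
    case (Suc k')
    have e1: "(2*Suc m) choose (2*k) = ((2*m+1) choose (2*k)) + ((2*m+1) choose (2*k'+1))"
      using Suc by simp
    have e2: "Suc m choose k = (m choose k) + (m choose k')" using Suc by simp
    show ?thesis unfolding e1 e2 by (rule addm) (use Suc.IH[of k] Suc.IH[of k'] in auto)
  qed
  have B: "((2*Suc m) choose (2*k+1)) mod 2 = 0" for k
  proof -
    have e1: "(2*Suc m) choose (2*k+1) = ((2*m+1) choose (2*k+1)) + ((2*m+1) choose (2*k))"
      by simp
    have "(((2*m+1) choose (2*k+1)) + ((2*m+1) choose (2*k))) mod 2 = ((m choose k) + (m choose k)) mod 2"
      by (rule addm) (use Suc.IH[of k] in auto)
    then show ?thesis unfolding e1 by simp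
  qed
  have C: "((2*Suc m+1) choose (2*k)) mod 2 = (Suc m choose k) mod 2" for k
  proof (cases k)
    case 0 then show ?thesis by simp
  next
    case (Suc k')
    have e1: "(2*Suc m+1) choose (2*k) = ((2*Suc m) choose (2*k)) + ((2*Suc m) choose (2*k'+1))"
      using Suc by simp
    show ?thesis unfolding e1 using addm0[OF A[of k] B[of k']] by simp
  qed
  have D: "((2*Suc m+1) choose (2*k+1)) mod 2 = (Suc m choose k) mod 2" for k
  proof -
    have e1: "(2*Suc m+1) choose (2*k+1) = ((2*Suc m) choose (2*k+1)) + ((2*Suc m) choose (2*k))"
      by simp
    show ?thesis unfolding e1 using addm0'[OF B[of k] A[of k]] by simp
  qed
  show ?case using A B C D by blast
qed

definition g :: "nat \<Rightarrow> nat \<Rightarrow> nat" where "g i j = ((i+j) choose i) mod 2"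

lemma g_rec: "g i j = g (i div 2) (j div 2) * (if odd i \<and> odd j then 0 else 1)"
proof -
  obtain a r where i: "i = 2*a + r" "r < 2" by (metis div_mult_mod_eq mod_less_divisor zero_less_numeral mult.commute)
  obtain b s where j: "j = 2*b + s" "s < 2" by (metis div_mult_mod_eq mod_less_divisor zero_less_numeral mult.commute)
  have "r = 0 \<or> r = 1" "s = 0 \<or> s = 1" using i j by auto
  have "i div 2 = a" "j div 2 = b" using i j by auto
  then have gd: "g (i div 2) (j div 2) = (a+b choose a) mod 2" by (simp add: g_def)
  have B1: "((2*m) choose (2*k)) mod 2 = (m choose k) mod 2" 
     "((2*m) choose (2*k+1)) mod 2 = 0"
     "((2*m+1) choose (2*k)) mod 2 = (m choose k) mod 2"
     "((2*m+1) choose (2*k+1)) mod 2 = (m choose k) mod 2" for m k using binom_mod2[of m k] by auto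
  consider "r = 0" "s = 0" | "r = 0" "s = 1" | "r = 1" "s = 0" | "r = 1" "s = 1" using i j by linarith
  then show ?thesis
  proof cases
    case 1
    then have "(i+j) choose i = (2*(a+b)) choose (2*a)" using i j by (simp add: algebra_simps)
    then have "g i j = (a+b choose a) mod 2" unfolding g_def by (metis B1(1)[of "a+b" a])
    then show ?thesis unfolding gd using 1 i j by simp
  next
    case 2
    then have "(i+j) choose i = (2*(a+b)+1) choose (2*a)" using i j by (simp add: algebra_simps)
    then have "g i j = (a+b choose a) mod 2" unfolding g_def by (metis B1(3)[of "a+b" a])
    then show ?thesis unfolding gd using 2 i j by simp
  next
    case 3
    then have "(i+j) choose i = (2*(a+b)+1) choose (2*a+1)" using i j by (simp add: algebra_simps)
    then have "g i j = (a+b choose a) mod 2" unfolding g_def by (metis B1(4)[of "a+b" a])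
    then show ?thesis unfolding gd using 3 i j by simp
  next
    case 4
    then have "(i+j) choose i = (2*(a+b+1)) choose (2*a+1)" using i j by (simp add: algebra_simps)
    then have "g i j = 0" unfolding g_def by (metis B1(2)[of "a+b+1" a])
    then show ?thesis unfolding gd using 4 i j by simp
  qed
qed


function sub :: "nat \<Rightarrow> nat \<Rightarrow> bool" where
  "sub k i = (if k = 0 \<and> i = 0 then True else k mod 2 \<le> i mod 2 \<and> sub (k div 2) (i div 2))"
  by auto
termination by (relation "measure (\<lambda>(k,i). k + i)") auto

declare sub.simps[simp del]
declare binary_digit_sum.simps[simp del]

lemma sub_rec: "sub k i = (k mod 2 \<le> i mod 2 \<and> sub (k div 2) (i div 2))"
  by (cases "k = 0 \<and> i = 0") (auto simp: sub.simps[of k i] sub.simps[of 0 0])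

lemma sub_le: "sub k i \<Longrightarrow> k \<le> i"
proof (induction k i rule: sub.induct)
  case (1 k i)
  show ?case
  proof (cases "k = 0 \<and> i = 0")
    case True then show ?thesis by simp
  next
    case False
    then have "k mod 2 \<le> i mod 2" "k div 2 \<le> i div 2" using 1 by (auto simp: sub_rec[of k i])
    moreover have "k = 2*(k div 2) + k mod 2" "i = 2*(i div 2) + i mod 2" by simp_all
    ultimately show ?thesis by linarith
  qed
qed

lemma sub_refl: "sub i i"
proof (induction i rule: less_induct)
  case (less i)
  show ?case
  proof (cases "i = 0")
    case True then show ?thesis by (simp add: sub.simps[of 0 0])
  next
    case False then show ?thesis using less[of "i div 2"] by (simp add: sub_rec[of i i])
  qed
qed

lemma sub_0: "sub k 0 \<longleftrightarrow> k = 0"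
  using sub_le sub_refl by fastforce

definition tm :: "nat \<Rightarrow> int" where "tm k = (-1) ^ binary_digit_sum k"

lemma bds2: "t < 2 \<Longrightarrow> binary_digit_sum (2*c+t) = t + binary_digit_sum c"
proof (cases "2*c+t = 0")
  case True then have "c = 0" "t = 0" by auto
  then show ?thesis by (simp add: binary_digit_sum.simps[of 0])
next
  case False
  assume "t < 2"
  then have "(2*c+t) mod 2 = t" "(2*c+t) div 2 = c" by auto
  have z: "binary_digit_sum 0 = 0" by (simp add: binary_digit_sum.simps[of 0])
  show ?thesis using False \<open>t < 2\<close> by (simp add: binary_digit_sum.simps[of "2*c+t"] z)
qed

lemma tm2: "tm (2*c) = tm c" "tm (2*c+1) = - tm c"
  using bds2[of 0 c] bds2[of 1 c] by (auto simp: tm_def)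

lemma tm2': "tm (Suc (2*c)) = - tm c" using tm2(2) by simp

definition T :: "nat \<Rightarrow> nat \<Rightarrow> nat set" where "T i j = {k. sub k i \<and> sub k j}"
definition F :: "nat \<Rightarrow> nat \<Rightarrow> int" where "F i j = (\<Sum>k\<in>T i j. tm k)"

lemma T_fin: "finite (T i j)"
  by (rule finite_subset[of _ "{..i}"]) (auto simp: T_def dest: sub_le)

lemma T_even: "T i j \<inter> {k. even k} = (\<lambda>c. 2*c) ` T (i div 2) (j div 2)"
  by (auto simp: T_def sub_rec[of _ i] sub_rec[of _ j])

lemma T_odd: "T i j \<inter> {k. odd k} = (if odd i \<and> odd j then (\<lambda>c. 2*c+1) ` T (i div 2) (j div 2) else {})"
  apply (auto simp: T_def sub_rec[of _ i] sub_rec[of _ j] odd_iff_mod_2_eq_one)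
  subgoal for x by (rule image_eqI[of _ _ "x div 2"]) (auto simp: odd_iff_mod_2_eq_one)
  done

lemma F_rec: "F i j = F (i div 2) (j div 2) * (if odd i \<and> odd j then 0 else 1)"
proof -
  let ?A = "T (i div 2) (j div 2)"
  have split: "T i j = (T i j \<inter> {k. even k}) \<union> (T i j \<inter> {k. odd k})" by auto
  have "F i j = (\<Sum>k\<in>T i j \<inter> {k. even k}. tm k) + (\<Sum>k\<in>T i j \<inter> {k. odd k}. tm k)"
    unfolding F_def by (subst split, rule sum.union_disjoint) (use T_fin in auto)
  moreover have "(\<Sum>k\<in>T i j \<inter> {k. even k}. tm k) = F (i div 2) (j div 2)"
    unfolding T_even F_def by (subst sum.reindex) (auto simp: inj_on_def tm2)
  moreover have "(\<Sum>k\<in>(\<lambda>c. 2*c+1) ` ?A. tm k) = - F (i div 2) (j div 2)"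
    unfolding F_def by (subst sum.reindex) (auto simp: inj_on_def tm2' sum_negf)
  ultimately show ?thesis unfolding T_odd by auto
qed

lemma F_g: "F i j = int (g i j)"
proof (induction "i+j" arbitrary: i j rule: less_induct)
  case less
  show ?case
  proof (cases "i = 0 \<and> j = 0")
    case True
    then have "T i j = {0}" by (auto simp: T_def sub_0)
    then show ?thesis using True by (simp add: F_def g_def tm_def binary_digit_sum.simps)
  next
    case False
    then have "i div 2 + j div 2 < i + j" by linarith
    then have "F (i div 2) (j div 2) = int (g (i div 2) (j div 2))" using less by blast
    then show ?thesis by (simp add: F_rec[of i j] g_rec[of i j])
  qed
qed

theorem theorem1p1:
  fixes n :: nat
  assumes "n \<ge> 1"
  shows "det (pascal_mod2 n) = (\<Prod>k<n. (-1::int) ^ thue_morse k)"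
proof -
  define LD :: "int mat" where "LD = mat n n (\<lambda>(i,k). if sub k i then tm k else 0)"
  define U :: "int mat" where "U = mat n n (\<lambda>(k,j). if sub k j then 1 else 0)"
  have LDc: "LD \<in> carrier_mat n n" and Uc: "U \<in> carrier_mat n n" by (auto simp: LD_def U_def)
  have eq: "pascal_mod2 n = LD * U"
  proof (rule eq_matI)
    fix i j assume ij: "i < dim_row (LD * U)" "j < dim_col (LD * U)"
    then have i: "i < n" and j: "j < n" using LDc Uc by auto
    have "(LD * U) $$ (i,j) = (\<Sum>k\<in>{0..<n}. LD $$ (i,k) * U $$ (k,j))"
      using i j LDc Uc by (simp add: scalar_prod_def)
    also have "\<dots> = (\<Sum>k\<in>{0..<n}. if sub k i \<and> sub k j then tm k else 0)"
      by (rule sum.cong) (auto simp: LD_def U_def i j)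
    also have "\<dots> = (\<Sum>k\<in>{k\<in>{0..<n}. sub k i \<and> sub k j}. tm k)"
      by (rule sum.inter_filter[symmetric]) simp
    also have "{k\<in>{0..<n}. sub k i \<and> sub k j} = T i j"
      using i by (auto simp: T_def dest: sub_le)
    finally have "(LD * U) $$ (i,j) = F i j" by (simp add: F_def)
    then show "pascal_mod2 n $$ (i, j) = (LD * U) $$ (i, j)"
      using i j F_g[of i j] by (simp add: pascal_mod2_def g_def)
  qed (use LDc Uc in \<open>auto simp: pascal_mod2_def\<close>)
  have dLD: "det LD = (\<Prod>k<n. tm k)"
  proof -
    have "det LD = prod_list (diag_mat LD)"
      by (rule det_lower_triangular[OF _ LDc]) (auto simp: LD_def dest: sub_le)
    also have "\<dots> = (\<Prod>k<n. tm k)" unfolding prod_list_diag_prod using LDc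
      by (auto simp: LD_def sub_refl atLeast0LessThan intro!: prod.cong)
    finally show ?thesis .
  qed
  have dU: "det U = 1"
  proof -
    have "det U = prod_list (diag_mat U)"
      by (rule det_upper_triangular[OF _ Uc]) (auto simp: U_def upper_triangular_def dest: sub_le)
    also have "\<dots> = 1" unfolding prod_list_diag_prod using Uc
      by (auto simp: U_def sub_refl intro!: prod.neutral)
    finally show ?thesis .
  qed
  have "(\<Prod>k<n. (-1::int) ^ thue_morse k) = (\<Prod>k<n. tm k)"
    by (rule prod.cong) (auto simp: thue_morse_def tm_def minus_one_power_iff)
  then show ?thesis using eq det_mult[OF LDc Uc] dLD dU by simp
qed

end
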